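(* Let $\tau_1,\tau_2:[0,1]\to[0,1]$ be piecewise $C^1$ maps with $\tau_1\le\tau_2$ on $[0,1]$, and suppose that $\tau_1$ and $\tau_2$ possess absolutely continuous invariant probability measures with densities $f_1$ and $f_2$, respectively. Let $0<\lambda<1$ and $f=\lambda f_1+(1-\lambda)f_2$. Let $\boldsymbol\tau$ be a selector (a piecewise $C^1$ map $\boldsymbol\tau:[0,1]\to[0,1]$ with $\tau_1\le\boldsymbol\tau\le\tau_2$) that preserves the density $f$. Then there exists a measurable function $p:[0,1]\to[0,1]$ such that the position dependent random map $R=\{\tau_1,\tau_2;p,1-p\}$ also preserves $f$.
   Context: A position dependent random map $R=\{\tau_1,\tau_2;p,1-p\}$, where $p:[0,1]\to[0,1]$ is measurable, moves a point $x$ to $\tau_1(x)$ with probability $p(x)$ and to $\tau_2(x)$ with probability $1-p(x)$. A density $f$ is invariant (preserved) for $R$ if $P_{\tau_1}(pf)+P_{\tau_2}((1-p)f)=f$ a.e., where $P_{\tau_k}$ is the Frobenius–Perron operator of $\tau_k$ with respect to Lebesgue measure. *)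

theory Defs
  imports "HOL-Analysis.Analysis"
begin

definition piecewise_C1 :: "(real \<Rightarrow> real) \<Rightarrow> bool" where
  "piecewise_C1 \<tau> \<longleftrightarrow>
     (\<exists>S. finite S \<and> S \<subseteq> {0..1} \<and> 0 \<in> S \<and> 1 \<in> S \<and>
        (\<forall>a\<in>S. \<forall>b\<in>S. a < b \<and> {a<..<b} \<inter> S = {} \<longrightarrow>
           (\<exists>g g'. (\<forall>x\<in>{a..b}. (g has_real_derivative g' x) (at x within {a..b})) \<and>
                   continuous_on {a..b} g' \<and>
                   (\<forall>x\<in>{a<..<b}. \<tau> x = g x))))"

definition maps_unit :: "(real \<Rightarrow> real) \<Rightarrow> bool" where
  "maps_unit \<tau> \<longleftrightarrow> \<tau> ` {0..1} \<subseteq> {0..1}"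

definition is_density :: "(real \<Rightarrow> real) \<Rightarrow> bool" where
  "is_density f \<longleftrightarrow> f \<in> borel_measurable borel \<and> (\<forall>x\<in>{0..1}. 0 \<le> f x) \<and>
     set_integrable lborel {0..1} f \<and> (LINT x:{0..1}|lborel. f x) = 1"

definition acim_density :: "(real \<Rightarrow> real) \<Rightarrow> (real \<Rightarrow> real) \<Rightarrow> bool" where
  "acim_density \<tau> f \<longleftrightarrow> is_density f \<and>
     (\<forall>A \<in> sets borel. A \<subseteq> {0..1} \<longrightarrow>
        (LINT x:(\<tau> -` A \<inter> {0..1})|lborel. f x) = (LINT x:A|lborel. f x))"

text \<open>h is (a version of) the Frobenius--Perron image P_tau g of g, i.e.
  h is integrable on [0,1] and its integral over any Borel A in [0,1] equals the
  integral of g over the preimage of A.\<close>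
definition FP_image :: "(real \<Rightarrow> real) \<Rightarrow> (real \<Rightarrow> real) \<Rightarrow> (real \<Rightarrow> real) \<Rightarrow> bool" where
  "FP_image \<tau> g h \<longleftrightarrow> h \<in> borel_measurable borel \<and> set_integrable lborel {0..1} h \<and>
     (\<forall>A \<in> sets borel. A \<subseteq> {0..1} \<longrightarrow>
        (LINT x:A|lborel. h x) = (LINT x:(\<tau> -` A \<inter> {0..1})|lborel. g x))"

definition preserves_density :: "(real \<Rightarrow> real) \<Rightarrow> (real \<Rightarrow> real) \<Rightarrow> bool" where
  "preserves_density \<tau> f \<longleftrightarrow>
     (\<exists>h. FP_image \<tau> f h \<and> (AE x in lborel. x \<in> {0..1} \<longrightarrow> h x = f x))"

definition random_map_preserves ::
  "(real \<Rightarrow> real) \<Rightarrow> (real \<Rightarrow> real) \<Rightarrow> (real \<Rightarrow> real) \<Rightarrow> (real \<Rightarrow> real) \<Rightarrow> bool" where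
  "random_map_preserves \<tau>1 \<tau>2 p f \<longleftrightarrow>
     (\<exists>h1 h2. FP_image \<tau>1 (\<lambda>x. p x * f x) h1 \<and> FP_image \<tau>2 (\<lambda>x. (1 - p x) * f x) h2 \<and>
        (AE x in lborel. x \<in> {0..1} \<longrightarrow> h1 x + h2 x = f x))"

end

theory Submission
  imports Defs
begin

lemma set_int_cong_sub:
  assumes "S \<subseteq> {0..1::real}" "\<forall>x\<in>{0..1}. g x = k x"
  shows "(LINT x:S|lborel. g x) = (LINT x:S|lborel. k x)"
proof -
  have "(\<lambda>x. indicator S x *\<^sub>R g x) = (\<lambda>x. indicator S x *\<^sub>R k x)"
    using assms by (intro ext) (auto simp: indicator_def subset_iff)
  then show ?thesis unfolding set_lebesgue_integral_def by simp
qed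

lemma FP_scaled:
  assumes "acim_density t g" "\<forall>x\<in>{0..1}. q x = c * g x"
  shows "FP_image t q (\<lambda>x. c * g x)"
proof -
  have d: "is_density g" and inv: "\<forall>A \<in> sets borel. A \<subseteq> {0..1} \<longrightarrow>
        (LINT x:(t -` A \<inter> {0..1})|lborel. g x) = (LINT x:A|lborel. g x)"
    using assms(1) unfolding acim_density_def by auto
  have m: "g \<in> borel_measurable borel" and i: "set_integrable lborel {0..1} g"
    using d unfolding is_density_def by auto
  show ?thesis unfolding FP_image_def
  proof (intro conjI ballI impI)
    show "(\<lambda>x. c * g x) \<in> borel_measurable borel" using m by measurable
    show "set_integrable lborel {0..1} (\<lambda>x. c * g x)" using i by auto
    fix A :: "real set" assume A: "A \<in> sets borel" "A \<subseteq> {0..1}"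
    have "(LINT x:(t -` A \<inter> {0..1})|lborel. q x) = (LINT x:(t -` A \<inter> {0..1})|lborel. c * g x)"
      by (rule set_int_cong_sub) (use assms(2) in auto)
    also have "\<dots> = c * (LINT x:A|lborel. g x)" using inv A by simp
    finally show "(LINT x:A|lborel. c * g x) = (LINT x:(t -` A \<inter> {0..1})|lborel. q x)" by simp
  qed
qed

theorem corollary1:
  fixes \<tau>1 \<tau>2 \<tau> f1 f2 :: "real \<Rightarrow> real" and lam :: real
  assumes "piecewise_C1 \<tau>1" "piecewise_C1 \<tau>2"
    and "maps_unit \<tau>1" "maps_unit \<tau>2"
    and "\<forall>x\<in>{0..1}. \<tau>1 x \<le> \<tau>2 x"
    and "acim_density \<tau>1 f1" "acim_density \<tau>2 f2"
    and "0 < lam" "lam < 1"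
    and "piecewise_C1 \<tau>" "maps_unit \<tau>"
    and "\<forall>x\<in>{0..1}. \<tau>1 x \<le> \<tau> x \<and> \<tau> x \<le> \<tau>2 x"
    and "preserves_density \<tau> (\<lambda>x. lam * f1 x + (1 - lam) * f2 x)"
  shows "\<exists>p :: real \<Rightarrow> real. p \<in> borel_measurable borel \<and> (\<forall>x\<in>{0..1}. 0 \<le> p x \<and> p x \<le> 1) \<and>
           random_map_preserves \<tau>1 \<tau>2 p (\<lambda>x. lam * f1 x + (1 - lam) * f2 x)"
proof -
  define f where "f = (\<lambda>x. lam * f1 x + (1 - lam) * f2 x)"
  define p where "p = (\<lambda>x. if f x = 0 then 0 else lam * f1 x / f x)"
  have m1: "f1 \<in> borel_measurable borel" and n1: "\<forall>x\<in>{0..1}. 0 \<le> f1 x"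
    using assms(6) unfolding acim_density_def is_density_def by auto
  have m2: "f2 \<in> borel_measurable borel" and n2: "\<forall>x\<in>{0..1}. 0 \<le> f2 x"
    using assms(7) unfolding acim_density_def is_density_def by auto
  have pm: "p \<in> borel_measurable borel" unfolding p_def f_def using m1 m2 by measurable
  have key: "p x * f x = lam * f1 x" if "x \<in> {0..1}" for x
  proof (cases "f x = 0")
    case True
    have "0 \<le> lam * f1 x" "0 \<le> (1 - lam) * f2 x" using n1 n2 that assms(8,9) by auto
    then have "lam * f1 x = 0" using True unfolding f_def by linarith
    then show ?thesis using True by (simp add: p_def)
  qed (simp add: p_def)
  have pb: "0 \<le> p x \<and> p x \<le> 1" if "x \<in> {0..1}" for x
  proof (cases "f x = 0")
    case False
    have a: "0 \<le> lam * f1 x" "0 \<le> (1 - lam) * f2 x" using n1 n2 that assms(8,9) by auto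
    then have "0 < f x" using False unfolding f_def by linarith
    then show ?thesis using a False unfolding p_def f_def by (auto simp: field_simps)
  qed (simp add: p_def)
  have key2: "(1 - p x) * f x = (1 - lam) * f2 x" if "x \<in> {0..1}" for x
    using key[OF that] unfolding f_def by (simp add: algebra_simps)
  have "random_map_preserves \<tau>1 \<tau>2 p f"
    unfolding random_map_preserves_def
  proof (intro exI conjI)
    show "FP_image \<tau>1 (\<lambda>x. p x * f x) (\<lambda>x. lam * f1 x)"
      by (rule FP_scaled[OF assms(6)]) (use key in auto)
    show "FP_image \<tau>2 (\<lambda>x. (1 - p x) * f x) (\<lambda>x. (1 - lam) * f2 x)"
      by (rule FP_scaled[OF assms(7)]) (use key2 in auto)
    show "AE x in lborel. x \<in> {0..1} \<longrightarrow> lam * f1 x + (1 - lam) * f2 x = f x"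
      by (simp add: f_def)
  qed
  then show ?thesis using pm pb unfolding f_def by blast
qed

end
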